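(* Let $n$ be a positive integer, let $\mathcal F$ be an $\mathcal N$-saturated family of subsets of $[n]$, and let $A_1,\dots,A_k$ and $B_1,\dots,B_l$ be sets in $\mathcal F$, where $k,l\ge1$, such that $\bigcup_{i=1}^l B_i\subseteq\bigcap_{i=1}^k A_i$. Then there exists $M\in\mathcal F$ such that $\bigcup_{i=1}^l B_i\subseteq M\subseteq\bigcap_{i=1}^k A_i$.
   Context: The poset $\mathcal N$ has four elements $a,b,c,d$ with $a<c$, $b<c$, $b<d$ and no other comparabilities. A family $\mathcal Q$ of sets (ordered by inclusion) contains an induced copy of $\mathcal N$ if there are distinct sets in $\mathcal Q$ whose inclusion relations are exactly those of $a,b,c,d$ above. A family $\mathcal F$ of subsets of $[n]=\{1,\dots,n\}$ is $\mathcal N$-saturated if $\mathcal F$ contains no induced copy of $\mathcal N$, but for every $S\subseteq[n]$ with $S\notin\mathcal F$, the family $\mathcal F\cup\{S\}$ contains an induced copy of $\mathcal N$. *)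

theory Defs
  imports Main
begin

definition incomparable :: "'a set \<Rightarrow> 'a set \<Rightarrow> bool" where
  "incomparable X Y \<longleftrightarrow> \<not> X \<subseteq> Y \<and> \<not> Y \<subseteq> X"

definition has_induced_N :: "'a set set \<Rightarrow> bool" where
  "has_induced_N Q \<longleftrightarrow> (\<exists>a\<in>Q. \<exists>b\<in>Q. \<exists>c\<in>Q. \<exists>d\<in>Q.
      distinct [a, b, c, d] \<and>
      a \<subset> c \<and> b \<subset> c \<and> b \<subset> d \<and>
      incomparable a b \<and> incomparable a d \<and> incomparable c d)"

definition N_saturated :: "nat \<Rightarrow> nat set set \<Rightarrow> bool" where
  "N_saturated n F \<longleftrightarrow> F \<subseteq> Pow {1..n} \<and> \<not> has_induced_N F \<and>
      (\<forall>S. S \<subseteq> {1..n} \<longrightarrow> S \<notin> F \<longrightarrow> has_induced_N (insert S F))"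

end

theory Submission
  imports Defs
begin

lemma key:
  assumes noN: "\<not> has_induced_N F"
    and hN: "has_induced_N (insert D F)"
    and DF: "D \<notin> F"
    and P2: "\<And>x. x \<in> F \<Longrightarrow> \<not> x \<subseteq> D \<Longrightarrow> \<exists>Y\<in>F. D \<subseteq> Y \<and> \<not> x \<subseteq> Y"
    and P4: "\<And>y. \<not> D \<subseteq> y \<Longrightarrow> \<exists>Z\<in>F. Z \<subseteq> D \<and> \<not> Z \<subseteq> y"
  shows False
proof -
  obtain a b c d where abcd: "a \<in> insert D F" "b \<in> insert D F" "c \<in> insert D F" "d \<in> insert D F"
    and dist: "distinct [a, b, c, d]" and r: "a \<subset> c" "b \<subset> c" "b \<subset> d"
    and i: "incomparable a b" "incomparable a d" "incomparable c d"
    using hN unfolding has_induced_N_def by blast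
  have NF: "\<And>a b c d. a \<in> F \<Longrightarrow> b \<in> F \<Longrightarrow> c \<in> F \<Longrightarrow> d \<in> F \<Longrightarrow> distinct [a, b, c, d] \<Longrightarrow>
      a \<subset> c \<Longrightarrow> b \<subset> c \<Longrightarrow> b \<subset> d \<Longrightarrow>
      incomparable a b \<Longrightarrow> incomparable a d \<Longrightarrow> incomparable c d \<Longrightarrow> False"
    using noN unfolding has_induced_N_def by blast
  have "a = D \<or> b = D \<or> c = D \<or> d = D"
  proof (rule ccontr)
    assume "\<not> ?thesis"
    then have "a \<in> F" "b \<in> F" "c \<in> F" "d \<in> F" using abcd by auto
    then show False using NF dist r i by blast
  qed
  moreover
  { assume aD: "a = D"
    then have F: "b \<in> F" "c \<in> F" "d \<in> F" using abcd dist by auto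
    have "\<not> D \<subseteq> d" using i aD unfolding incomparable_def by auto
    then obtain Z where Z: "Z \<in> F" "Z \<subseteq> D" "\<not> Z \<subseteq> d" using P4 by blast
    have False
      apply (rule NF[of Z b c d])
      using Z F r i dist aD unfolding incomparable_def by auto
  }
  moreover
  { assume bD: "b = D"
    then have F: "a \<in> F" "c \<in> F" "d \<in> F" using abcd dist by auto
    have "\<not> D \<subseteq> a" using i bD unfolding incomparable_def by auto
    then obtain Z where Z: "Z \<in> F" "Z \<subseteq> D" "\<not> Z \<subseteq> a" using P4 by blast
    have False
      apply (rule NF[of a Z c d])
      using Z F r i dist bD unfolding incomparable_def by auto
  }
  moreover
  { assume cD: "c = D"
    then have F: "a \<in> F" "b \<in> F" "d \<in> F" using abcd dist by auto
    have "\<not> d \<subseteq> D" using i cD unfolding incomparable_def by auto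
    then obtain Y where Y: "Y \<in> F" "D \<subseteq> Y" "\<not> d \<subseteq> Y" using P2 F by blast
    have False
      apply (rule NF[of a b Y d])
      using Y F r i dist cD unfolding incomparable_def by auto
  }
  moreover
  { assume dD: "d = D"
    then have F: "a \<in> F" "b \<in> F" "c \<in> F" using abcd dist by auto
    have "\<not> a \<subseteq> D" using i dD unfolding incomparable_def by auto
    then obtain Y where Y: "Y \<in> F" "D \<subseteq> Y" "\<not> a \<subseteq> Y" using P2 F by blast
    have False
      apply (rule NF[of a b c Y])
      using Y F r i dist dD unfolding incomparable_def by auto
  }
  ultimately show False by blast
qed

theorem lemma2p3:
  fixes n k l :: nat and F :: "nat set set" and A B :: "nat \<Rightarrow> nat set"
  assumes "n \<ge> 1"
    and "N_saturated n F"
    and "k \<ge> 1" and "l \<ge> 1"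
    and "\<forall>i\<in>{1..k}. A i \<in> F"
    and "\<forall>i\<in>{1..l}. B i \<in> F"
    and "(\<Union>i\<in>{1..l}. B i) \<subseteq> (\<Inter>i\<in>{1..k}. A i)"
  shows "\<exists>M\<in>F. (\<Union>i\<in>{1..l}. B i) \<subseteq> M \<and> M \<subseteq> (\<Inter>i\<in>{1..k}. A i)"
proof -
  define I where "I = (\<Inter>i\<in>{1..k}. A i)"
  define D where "D = \<Union>{Z\<in>F. Z \<subseteq> I}"
  have sat: "F \<subseteq> Pow {1..n}" "\<not> has_induced_N F"
    "\<And>S. S \<subseteq> {1..n} \<Longrightarrow> S \<notin> F \<Longrightarrow> has_induced_N (insert S F)"
    using assms(2) unfolding N_saturated_def by auto
  have k1: "1 \<in> {1..k}" using assms(3) by auto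
  have DI: "D \<subseteq> I" unfolding D_def by blast
  have UD: "(\<Union>i\<in>{1..l}. B i) \<subseteq> D" using assms(6,7) unfolding D_def I_def by blast
  have "D \<in> F"
  proof (rule ccontr)
    assume DF: "D \<notin> F"
    have "D \<subseteq> A 1" using DI k1 unfolding I_def by blast
    moreover have "A 1 \<subseteq> {1..n}" using sat(1) assms(5) k1 by blast
    ultimately have hN: "has_induced_N (insert D F)" using sat(3) DF by blast
    show False
    proof (rule key[OF sat(2) hN DF])
      fix x assume x: "x \<in> F" "\<not> x \<subseteq> D"
      then have "\<not> x \<subseteq> I" unfolding D_def by blast
      then obtain i where "i \<in> {1..k}" "\<not> x \<subseteq> A i" unfolding I_def by blast
      then show "\<exists>Y\<in>F. D \<subseteq> Y \<and> \<not> x \<subseteq> Y" using assms(5) DI unfolding I_def by blast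
    next
      fix y assume "\<not> D \<subseteq> y"
      then show "\<exists>Z\<in>F. Z \<subseteq> D \<and> \<not> Z \<subseteq> y" unfolding D_def by blast
    qed
  qed
  then show ?thesis using UD DI unfolding I_def by blast
qed

end
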